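(* Let $n\in\mathbb{N}$, $n\ge1$, and $\Delta,\Delta'\in\mathcal{P}_n$. Then $f^{(\Delta)}_{32,n}\neq f^{(\Delta')}_{32,n}$ if and only if there exists $i\in\mathbb{Z}_n$ such that one of the following holds: (1) $lab_\Delta((i+1,i))=lab_\Delta((i-1,i))=\oplus$ and ($lab_{\Delta'}((i+1,i))=\ominus$ or $lab_{\Delta'}((i-1,i))=\ominus$); (2) $lab_{\Delta'}((i+1,i))=lab_{\Delta'}((i-1,i))=\oplus$ and ($lab_\Delta((i+1,i))=\ominus$ or $lab_\Delta((i-1,i))=\ominus$).
   Context: Cells are indexed by $\mathbb{Z}_n=\{0,\dots,n-1\}$, indices modulo $n$. Rule $32$ has local rule $r_{32}(x_1,x_2,x_3)=x_1\wedge\neg x_2\wedge x_3$ and global function $f_{32,n}(x)_i=r_{32}(x_{i-1},x_i,x_{i+1})$. An update schedule is an ordered partition $\Delta=(\Delta_1,\dots,\Delta_k)$ of $\mathbb{Z}_n$ into nonempty blocks; $\mathcal{P}_n$ is the set of them. For a block $B$ let $f^{(B)}(x)_i=f_{32,n}(x)_i$ if $i\in B$ and $x_i$ otherwise; $f^{(\Delta)}_{32,n}=f^{(\Delta_k)}\circ\cdots\circ f^{(\Delta_1)}$. (The paper phrases the conclusion as inequality of the transition digraphs with arcs $(x,f^{(\Delta)}_{32,n}(x))$, which is equivalent to inequality of the maps.) For $u,v\in\mathbb{Z}_n$ with $u\in\Delta_a$, $v\in\Delta_b$, $lab_\Delta((u,v))=\oplus$ if $b\le a$ and $\ominus$ if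 $a<b$. *)

theory Defs
  imports Main
begin

definition configs :: "nat \<Rightarrow> (nat \<Rightarrow> bool) set" where
  "configs n = {x. \<forall>i\<ge>n. \<not> x i}"

definition r32 :: "bool \<Rightarrow> bool \<Rightarrow> bool \<Rightarrow> bool" where
  "r32 a b c = (a \<and> \<not> b \<and> c)"

definition f32 :: "nat \<Rightarrow> (nat \<Rightarrow> bool) \<Rightarrow> nat \<Rightarrow> bool" where
  "f32 n x i = r32 (x ((i + n - 1) mod n)) (x i) (x ((i + 1) mod n))"

definition block_upd :: "nat \<Rightarrow> nat set \<Rightarrow> (nat \<Rightarrow> bool) \<Rightarrow> (nat \<Rightarrow> bool)" where
  "block_upd n B x = (\<lambda>i. if i \<in> B then f32 n x i else x i)"

definition sched32 :: "nat \<Rightarrow> nat set list \<Rightarrow> (nat \<Rightarrow> bool) \<Rightarrow> (nat \<Rightarrow> bool)" where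
  "sched32 n D x = fold (block_upd n) D x"

definition is_schedule :: "nat \<Rightarrow> nat set list \<Rightarrow> bool" where
  "is_schedule n D \<longleftrightarrow>
     (\<forall>a<length D. D ! a \<noteq> {}) \<and>
     (\<forall>a<length D. \<forall>b<length D. a \<noteq> b \<longrightarrow> D ! a \<inter> D ! b = {}) \<and>
     \<Union> (set D) = {0..<n}"

definition blk :: "nat set list \<Rightarrow> nat \<Rightarrow> nat" where
  "blk D u = (THE a. a < length D \<and> u \<in> D ! a)"

datatype label = Plus | Minus

definition lab :: "nat set list \<Rightarrow> nat \<Rightarrow> nat \<Rightarrow> label" where
  "lab D u v = (if blk D v \<le> blk D u then Plus else Minus)"

end

theory Submission
  imports Defs
begin

lemma blk_eq:
  assumes "is_schedule n D" "a < length D" "j \<in> D ! a"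
  shows "blk D j = a"
  unfolding blk_def
proof (rule the_equality)
  show "a < length D \<and> j \<in> D ! a" using assms by simp
  fix b assume "b < length D \<and> j \<in> D ! b"
  then show "b = a" using assms unfolding is_schedule_def by blast
qed

lemma blk_props:
  assumes "is_schedule n D" "j < n"
  shows "blk D j < length D \<and> j \<in> D ! blk D j"
proof -
  have "j \<in> \<Union> (set D)" using assms unfolding is_schedule_def by auto
  then obtain B where "B \<in> set D" "j \<in> B" by blast
  then obtain a where "a < length D" "j \<in> D ! a" by (auto simp: in_set_conv_nth)
  then show ?thesis using blk_eq[OF assms(1)] by simp
qed

lemma in_blk_lt:
  assumes "is_schedule n D" "a < length D" "j \<in> D ! a"
  shows "j < n"
proof -
  have "j \<in> \<Union> (set D)" using assms by auto
  then show ?thesis using assms(1) unfolding is_schedule_def by auto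
qed

lemma mod_left_right:
  assumes "j < (n::nat)"
  shows "((j + n - 1) mod n + 1) mod n = j"
proof (cases "j = 0")
  case True
  have "n - 1 < n" using assms by linarith
  then have "(j + n - 1) mod n = n - 1" using True by (simp only: add_0 mod_less)
  then have "(j + n - 1) mod n + 1 = n" using assms by linarith
  then show ?thesis using True by simp
next
  case False
  have e: "j + n - 1 = (j - 1) + n" using assms False by linarith
  have "j - 1 < n" using assms by linarith
  then have "(j + n - 1) mod n = j - 1" unfolding e by simp
  then show ?thesis using False assms by simp
qed

lemma mod_right_left:
  assumes "j < (n::nat)"
  shows "((j + 1) mod n + n - 1) mod n = j"
proof (cases "j + 1 = n")
  case True
  then have "(j + 1) mod n = 0" by simp
  then have "(j + 1) mod n + n - 1 = j" using True by linarith
  then show ?thesis using assms by simp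
next
  case False
  then have "(j + 1) mod n = j + 1" using assms by simp
  then have "(j + 1) mod n + n - 1 = j + n" by linarith
  then show ?thesis using assms by simp
qed

definition gfin :: "nat \<Rightarrow> nat set list \<Rightarrow> (nat \<Rightarrow> bool) \<Rightarrow> nat \<Rightarrow> bool" where
  "gfin n D x j = (lab D ((j + 1) mod n) j = Plus \<and> lab D ((j + n - 1) mod n) j = Plus \<and> f32 n x j)"

lemma invariant:
  assumes S: "is_schedule n D" and n: "n \<ge> 1" and k: "k \<le> length D"
  shows "fold (block_upd n) (take k D) x j = (if j < n \<and> blk D j < k then gfin n D x j else x j)"
  using k
proof (induction k arbitrary: j)
  case 0
  then show ?case by simp
next
  case (Suc k)
  let ?y = "fold (block_upd n) (take k D) x"
  have kl: "k < length D" using Suc by simp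
  have IH: "\<And>j. ?y j = (if j < n \<and> blk D j < k then gfin n D x j else x j)"
    using Suc by simp
  have fo: "fold (block_upd n) (take (Suc k) D) x = block_upd n (D ! k) ?y"
    using kl by (simp add: take_Suc_conv_app_nth)
  have foj: "fold (block_upd n) (take (Suc k) D) x j = (if j \<in> D ! k then f32 n ?y j else ?y j)"
    unfolding fo by (simp only: block_upd_def)
  show ?case
  proof (cases "j \<in> D ! k")
    case False
    have "j < n \<and> blk D j < Suc k \<longleftrightarrow> j < n \<and> blk D j < k"
    proof
      assume a: "j < n \<and> blk D j < Suc k"
      then have "blk D j \<noteq> k" using blk_props[OF S, of j] False by auto
      then show "j < n \<and> blk D j < k" using a by simp
    qed simp
    then show ?thesis using False foj IH by simp
  next
    case True
    have jn: "j < n" using in_blk_lt[OF S kl True] .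
    have bj: "blk D j = k" using blk_eq[OF S kl True] .
    define l where "l = (j + n - 1) mod n"
    define r where "r = (j + 1) mod n"
    have ln: "l < n" using n unfolding l_def by simp
    have rn: "r < n" using n unfolding r_def by simp
    have lr: "(l + 1) mod n = j" using mod_left_right[OF jn] l_def by simp
    have rl: "(r + n - 1) mod n = j" using mod_right_left[OF jn] r_def by simp
    have labl: "lab D l j = Plus \<longleftrightarrow> \<not> blk D l < k" using bj unfolding lab_def by auto
    have labr: "lab D r j = Plus \<longleftrightarrow> \<not> blk D r < k" using bj unfolding lab_def by auto
    have gl: "gfin n D x l \<Longrightarrow> x j" using lr unfolding gfin_def f32_def r32_def by auto
    have gr: "gfin n D x r \<Longrightarrow> x j" using rl unfolding gfin_def f32_def r32_def by auto
    have yj: "?y j = x j" using IH[of j] bj by simp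
    have yl: "?y l = (if blk D l < k then gfin n D x l else x l)" using IH[of l] ln by simp
    have yr: "?y r = (if blk D r < k then gfin n D x r else x r)" using IH[of r] rn by simp
    have fx: "f32 n x j = r32 (x l) (x j) (x r)" unfolding f32_def l_def r_def ..
    have fy: "f32 n ?y j = r32 (?y l) (?y j) (?y r)" unfolding f32_def l_def r_def ..
    have gj: "gfin n D x j = (lab D r j = Plus \<and> lab D l j = Plus \<and> f32 n x j)"
      unfolding gfin_def l_def r_def ..
    have "f32 n ?y j = gfin n D x j"
    proof (cases "blk D l < k")
      case True
      then show ?thesis using fy gj yl yj labl gl unfolding r32_def by auto
    next
      case False
      note F = False
      show ?thesis
      proof (cases "blk D r < k")
        case True
        then show ?thesis using fy gj yr yj labr gr unfolding r32_def by auto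
      next
        case False
        then show ?thesis using F fy fx gj yl yr yj labl labr by simp
      qed
    qed
    then show ?thesis using True foj jn bj by simp
  qed
qed

lemma sched_char:
  assumes S: "is_schedule n D" and n: "n \<ge> 1"
  shows "sched32 n D x j = (if j < n then gfin n D x j else x j)"
proof -
  have "sched32 n D x = fold (block_upd n) (take (length D) D) x"
    unfolding sched32_def by simp
  then show ?thesis using invariant[OF S n, of "length D" x j] blk_props[OF S] by auto
qed

theorem mainTheorem13:
  fixes n :: nat and D D' :: "nat set list"
  assumes "n \<ge> 1" and "is_schedule n D" and "is_schedule n D'"
  shows "(\<exists>x\<in>configs n. sched32 n D x \<noteq> sched32 n D' x) \<longleftrightarrow>
    (\<exists>i<n.
      (lab D ((i + 1) mod n) i = Plus \<and> lab D ((i + n - 1) mod n) i = Plus \<and>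
        (lab D' ((i + 1) mod n) i = Minus \<or> lab D' ((i + n - 1) mod n) i = Minus)) \<or>
      (lab D' ((i + 1) mod n) i = Plus \<and> lab D' ((i + n - 1) mod n) i = Plus \<and>
        (lab D ((i + 1) mod n) i = Minus \<or> lab D ((i + n - 1) mod n) i = Minus)))"
  (is "?L \<longleftrightarrow> ?R")
proof
  assume ?L
  then obtain x j where d: "sched32 n D x j \<noteq> sched32 n D' x j" by blast
  have jn: "j < n"
  proof (rule ccontr)
    assume "\<not> j < n"
    then show False using d sched_char[OF assms(2,1)] sched_char[OF assms(3,1)] by simp
  qed
  have "gfin n D x j \<noteq> gfin n D' x j"
    using d jn sched_char[OF assms(2,1)] sched_char[OF assms(3,1)] by simp
  then show ?R using jn unfolding gfin_def
    by (cases "lab D ((j+1) mod n) j"; cases "lab D ((j+n-1) mod n) j";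
        cases "lab D' ((j+1) mod n) j"; cases "lab D' ((j+n-1) mod n) j") auto
next
  assume ?R
  then obtain i where i: "i < n" and c:
    "(lab D ((i + 1) mod n) i = Plus \<and> lab D ((i + n - 1) mod n) i = Plus \<and>
        (lab D' ((i + 1) mod n) i = Minus \<or> lab D' ((i + n - 1) mod n) i = Minus)) \<or>
      (lab D' ((i + 1) mod n) i = Plus \<and> lab D' ((i + n - 1) mod n) i = Plus \<and>
        (lab D ((i + 1) mod n) i = Minus \<or> lab D ((i + n - 1) mod n) i = Minus))" by blast
  have self: "\<And>E. lab E i i = Plus" unfolding lab_def by simp
  have ne: "(i + 1) mod n \<noteq> i \<or> (i + n - 1) mod n \<noteq> i"
  proof (rule ccontr)
    assume "\<not> ?thesis"
    then have "(i + 1) mod n = i" "(i + n - 1) mod n = i" by auto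
    then show False using c self by simp
  qed
  have r1: "(i + 1) mod n \<noteq> i"
  proof
    assume h: "(i + 1) mod n = i"
    then have "(i + n - 1) mod n = i" using mod_right_left[OF i] by simp
    then show False using ne h by simp
  qed
  have l1: "(i + n - 1) mod n \<noteq> i"
  proof
    assume h: "(i + n - 1) mod n = i"
    then have "(i + 1) mod n = i" using mod_left_right[OF i] by simp
    then show False using r1 by simp
  qed
  define x where "x = (\<lambda>j. j \<noteq> i \<and> j < n)"
  have xc: "x \<in> configs n" unfolding x_def configs_def by simp
  have f: "f32 n x i" unfolding f32_def r32_def x_def using r1 l1 assms(1) by simp
  have "gfin n D x i \<noteq> gfin n D' x i" using c f unfolding gfin_def
    by (cases "lab D ((i+1) mod n) i"; cases "lab D ((i+n-1) mod n) i";
        cases "lab D' ((i+1) mod n) i"; cases "lab D' ((i+n-1) mod n) i") simp_all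
  then have "sched32 n D x i \<noteq> sched32 n D' x i"
    using sched_char[OF assms(2,1)] sched_char[OF assms(3,1)] i by simp
  then have "sched32 n D x \<noteq> sched32 n D' x" by metis
  then show ?L using xc by blast
qed

end
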